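(* Let $k\ge3$ be odd and let $G$ be a $k$-uniform hypergraph. Then the number of minimal canonical H-eigenvectors of the signless Laplacian tensor $\mathcal D+\mathcal A$ corresponding to the eigenvalue $0$, counted with $\mathbf x$ and $-\mathbf x$ identified, equals the number of singletons (isolated vertices) of $G$.
   Context: A $k$-uniform hypergraph $G=(V,E)$ has vertex set $V=[n]$ ($n\ge k$) and nonempty edge set $E$ of $k$-element subsets; $E_i=\{e\in E:i\in e\}$, $d_i=|E_i|$; a singleton is a vertex with $d_i=0$. $\mathcal A$: $a_{i_1\dots i_k}=\frac1{(k-1)!}$ if $\{i_1,\dots,i_k\}\in E$, else $0$; $\mathcal D$ diagonal with $d_{i\dots i}=d_i$; so $((\mathcal D+\mathcal A)\mathbf x^{k-1})_i=d_ix_i^{k-1}+\sum_{e\in E_i}\prod_{j\in e\setminus\{i\}}x_j$. A nonzero $\mathbf x\in\mathbb C^n$ is an eigenvector of $\mathcal T$ for $\lambda$ if $(\mathcal T\mathbf x^{k-1})_i=\lambda x_i^{k-1}$ for all $i$; an H-eigenvector is a real eigenvector; canonical means $\max_i|x_i|=1$; an eigenvector of eigenvalue $0$ is minimal if no eigenvector of eigenvalue $0$ has support strictly contained in its support. *)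

theory Defs
  imports Complex_Main
begin

text \<open>Vertex set: a finite type 'a (playing the role of [n]). Vectors: functions 'a \<Rightarrow> complex.\<close>

definition uniform_hypergraph :: "nat \<Rightarrow> 'a::finite set set \<Rightarrow> bool" where
  "uniform_hypergraph k E \<longleftrightarrow> E \<noteq> {} \<and> (\<forall>e\<in>E. card e = k)"

definition edges_at :: "'a set set \<Rightarrow> 'a \<Rightarrow> 'a set set" where
  "edges_at E i = {e\<in>E. i \<in> e}"

definition hdeg :: "'a set set \<Rightarrow> 'a \<Rightarrow> nat" where
  "hdeg E i = card (edges_at E i)"

definition singletons :: "'a::finite set set \<Rightarrow> 'a set" where
  "singletons E = {i. hdeg E i = 0}"

text \<open>((D + A) x^(k-1))_i\<close>
definition signless_lap_apply :: "nat \<Rightarrow> 'a set set \<Rightarrow> ('a \<Rightarrow> complex) \<Rightarrow> 'a \<Rightarrow> complex" where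
  "signless_lap_apply k E x i =
     of_nat (hdeg E i) * x i ^ (k - 1) + (\<Sum>e\<in>edges_at E i. \<Prod>j\<in>e - {i}. x j)"

definition is_eigvec :: "nat \<Rightarrow> 'a set set \<Rightarrow> complex \<Rightarrow> ('a \<Rightarrow> complex) \<Rightarrow> bool" where
  "is_eigvec k E lam x \<longleftrightarrow> x \<noteq> (\<lambda>_. 0) \<and>
     (\<forall>i. signless_lap_apply k E x i = lam * x i ^ (k - 1))"

definition is_H_eigvec :: "nat \<Rightarrow> 'a set set \<Rightarrow> complex \<Rightarrow> ('a \<Rightarrow> complex) \<Rightarrow> bool" where
  "is_H_eigvec k E lam x \<longleftrightarrow> is_eigvec k E lam x \<and> (\<forall>i. x i \<in> \<real>)"

definition canonical :: "('a::finite \<Rightarrow> complex) \<Rightarrow> bool" where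
  "canonical x \<longleftrightarrow> Max (range (\<lambda>i. cmod (x i))) = 1"

definition vsupp :: "('a \<Rightarrow> complex) \<Rightarrow> 'a set" where
  "vsupp x = {i. x i \<noteq> 0}"

definition minimal_zero_eigvec :: "nat \<Rightarrow> 'a set set \<Rightarrow> ('a \<Rightarrow> complex) \<Rightarrow> bool" where
  "minimal_zero_eigvec k E x \<longleftrightarrow> is_eigvec k E 0 x \<and>
     \<not> (\<exists>y. is_eigvec k E 0 y \<and> vsupp y \<subset> vsupp x)"

definition min_can_H0 :: "nat \<Rightarrow> 'a::finite set set \<Rightarrow> ('a \<Rightarrow> complex) set" where
  "min_can_H0 k E = {x. is_H_eigvec k E 0 x \<and> canonical x \<and> minimal_zero_eigvec k E x}"

end

theory Submission imports Defs begin

lemma key: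
  fixes r :: "'a::finite \<Rightarrow> real" and E :: "'a set set"
  assumes k3: "k \<ge> 3" and ko: "odd k" and unif: "\<forall>e\<in>E. card e = k"
    and eq: "\<forall>i. real (hdeg E i) * r i ^ (k-1) + (\<Sum>e\<in>edges_at E i. \<Prod>j\<in>e-{i}. r j) = 0"
    and nz: "r j0 \<noteq> 0"
  shows "\<exists>i. hdeg E i = 0 \<and> r i \<noteq> 0"
proof -
  define m where "m = Max (range (\<lambda>j. \<bar>r j\<bar>))"
  have bound: "\<And>j. \<bar>r j\<bar> \<le> m" unfolding m_def by (rule Max_ge) auto
  have "m \<in> range (\<lambda>j. \<bar>r j\<bar>)" unfolding m_def by (rule Max_in) auto
  then obtain i where ri: "\<bar>r i\<bar> = m" by auto
  have mpos: "m > 0" using bound[of j0] nz by linarith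
  have ev: "even (k-1)" using ko k3 by simp
  have step1: "(\<Prod>l\<in>e-{j}. r l) = -(m^(k-1))"
    if rj: "\<bar>r j\<bar> = m" and eE: "e \<in> edges_at E j" for j e
  proof -
    have fin: "finite (edges_at E j)" by simp
    have ge: "(\<Prod>l\<in>e'-{j}. r l) \<ge> -(m^(k-1))" if "e' \<in> edges_at E j" for e'
    proof -
      have je: "j \<in> e'" "e' \<in> E" using that by (auto simp: edges_at_def)
      have c: "card (e'-{j}) = k-1" using je unif by (simp add: card_Diff_singleton)
      have "\<bar>\<Prod>l\<in>e'-{j}. r l\<bar> = (\<Prod>l\<in>e'-{j}. \<bar>r l\<bar>)" by (simp add: abs_prod)
      also have "\<dots> \<le> (\<Prod>l\<in>e'-{j}. m)" by (rule prod_mono) (simp add: bound)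
      also have "\<dots> = m^(k-1)" using c by simp
      finally show ?thesis by linarith
    qed
    have rjp: "r j ^ (k-1) = m^(k-1)" using rj power_even_abs[OF ev, of "r j"] by simp
    have s: "(\<Sum>e'\<in>edges_at E j. \<Prod>l\<in>e'-{j}. r l) = - (real (hdeg E j) * m^(k-1))"
      using eq[rule_format, of j] rjp by (simp add: eq_neg_iff_add_eq_0 add.commute)
    have "(\<Sum>e'\<in>edges_at E j. (\<Prod>l\<in>e'-{j}. r l) + m^(k-1)) = 0"
      using s by (simp add: sum.distrib hdeg_def)
    then have "\<forall>e'\<in>edges_at E j. (\<Prod>l\<in>e'-{j}. r l) + m^(k-1) = 0"
      using sum_nonneg_eq_0_iff[OF fin, of "\<lambda>e'. (\<Prod>l\<in>e'-{j}. r l) + m^(k-1)"] ge by force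
    then show ?thesis using eE by force
  qed
  show ?thesis
  proof (cases "hdeg E i = 0")
    case True then show ?thesis using ri mpos by force
  next
    case False
    then have "edges_at E i \<noteq> {}" unfolding hdeg_def by auto
    then obtain e where eE: "e \<in> edges_at E i" by auto
    have ie: "i \<in> e" "e \<in> E" using eE by (auto simp: edges_at_def)
    have ce: "card e = k" using ie unif by simp
    have fe: "finite e" by simp
    define P where "P = (\<Prod>l\<in>e. r l)"
    have Pi: "P = r i * (\<Prod>l\<in>e-{i}. r l)" unfolding P_def using ie fe by (simp add: prod.remove)
    have absP: "\<bar>P\<bar> = m^k"
    proof -
      have "\<bar>P\<bar> = m * m^(k-1)" using Pi step1[OF ri eE] ri mpos by (simp add: abs_mult)
      also have "\<dots> = m^k" using k3 by (metis Suc_diff_1 gr0I not_numeral_le_zero power_Suc)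
      finally show ?thesis .
    qed
    have all: "\<bar>r l\<bar> = m" if "l \<in> e" for l
    proof -
      have "P = r l * (\<Prod>j\<in>e-{l}. r j)" unfolding P_def using that fe by (simp add: prod.remove)
      then have "\<bar>P\<bar> = \<bar>r l\<bar> * (\<Prod>j\<in>e-{l}. \<bar>r j\<bar>)" by (simp add: abs_mult abs_prod)
      also have "\<dots> \<le> \<bar>r l\<bar> * (\<Prod>j\<in>e-{l}. m)"
        by (rule mult_left_mono, rule prod_mono) (auto simp: bound)
      also have "\<dots> = \<bar>r l\<bar> * m^(k-1)" using that ce by (simp add: card_Diff_singleton)
      finally have "m * m^(k-1) \<le> \<bar>r l\<bar> * m^(k-1)" using absP k3
        by (metis Suc_diff_1 gr0I not_numeral_le_zero power_Suc)
      then have "m \<le> \<bar>r l\<bar>" using mpos by (simp add: mult_le_cancel_right)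
      then show ?thesis using bound[of l] by linarith
    qed
    have Pl: "P = -(m^(k-1)) * r l" if "l \<in> e" for l
    proof -
      have "e \<in> edges_at E l" using that ie by (simp add: edges_at_def)
      then have "(\<Prod>j\<in>e-{l}. r j) = -(m^(k-1))" using step1 all[OF that] by blast
      moreover have "P = r l * (\<Prod>j\<in>e-{l}. r j)" unfolding P_def using that fe by (simp add: prod.remove)
      ultimately show ?thesis by simp
    qed
    have "P ^ k = (\<Prod>l\<in>e. P)" using ce by simp
    also have "\<dots> = (\<Prod>l\<in>e. -(m^(k-1)) * r l)" using Pl by (rule prod.cong[OF refl])
    also have "\<dots> = (-(m^(k-1)))^k * P" unfolding P_def using ce prod.distrib[of "\<lambda>_. -(m^(k-1))" r e] by (simp only: prod_constant)
    finally have Pk: "P ^ k = (-(m^(k-1)))^k * P" .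
    have Pnz: "P \<noteq> 0" using absP mpos by auto
    have "P ^ k = P ^ (k-1) * P" using k3 by (metis Suc_diff_1 gr0I mult.commute not_numeral_le_zero power_Suc)
    with Pk Pnz have "P ^ (k-1) = (-(m^(k-1)))^k" by simp
    also have "\<dots> = -((m^(k-1))^k)" using ko by simp
    finally have A: "P^(k-1) = -((m^(k-1))^k)" .
    have B: "(m^(k-1))^k > 0" using mpos by simp
    have C: "P^(k-1) \<ge> 0" using ev by (rule zero_le_even_power)
    from A B C show ?thesis by linarith
  qed
qed

definition dl :: "'a \<Rightarrow> complex \<Rightarrow> 'a \<Rightarrow> complex" where
  "dl i c = (\<lambda>j. if j = i then c else 0)"

lemma delta_eig:
  assumes k3: "k \<ge> 3" and unif: "\<forall>e\<in>E. card e = k" and hi: "hdeg E (i::'a::finite) = 0" and c: "c \<noteq> 0"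
  shows "is_eigvec k E 0 (dl i c)"
proof -
  have ei: "edges_at E i = {}" using hi by (simp add: hdeg_def)
  have "signless_lap_apply k E (dl i c) j = 0" for j
  proof (cases "j = i")
    case True then show ?thesis using ei by (simp add: signless_lap_apply_def hi)
  next
    case False
    have z: "(\<Prod>l\<in>e-{j}. dl i c l) = 0" if "e \<in> edges_at E j" for e
    proof -
      have eE: "e \<in> E" "j \<in> e" using that by (auto simp: edges_at_def)
      have ni: "i \<notin> e" using ei eE by (auto simp: edges_at_def)
      have "card (e - {j}) = k - 1" using eE unif by (simp add: card_Diff_singleton)
      then have "card (e - {j}) \<noteq> 0" using k3 by simp
      then have "e - {j} \<noteq> {}" by (metis card.empty)
      then obtain l where l: "l \<in> e - {j}" by auto
      then have "dl i c l = 0" using ni by (auto simp: dl_def)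
      then show ?thesis using l by (intro prod_zero) auto
    qed
    have "(\<Sum>e\<in>edges_at E j. \<Prod>l\<in>e-{j}. dl i c l) = 0" using z by (intro sum.neutral) blast
    moreover have "dl i c j = 0" using False by (simp add: dl_def)
    ultimately show ?thesis using k3 by (simp add: signless_lap_apply_def)
  qed
  moreover have "dl i c \<noteq> (\<lambda>_. 0)" using c by (metis dl_def)
  ultimately show ?thesis by (simp add: is_eigvec_def)
qed

lemma real_eq:
  fixes x :: "'a::finite \<Rightarrow> complex"
  assumes "\<forall>i. x i \<in> \<real>"
  shows "signless_lap_apply k E x i = of_real (real (hdeg E i) * Re (x i) ^ (k-1) + (\<Sum>e\<in>edges_at E i. \<Prod>j\<in>e-{i}. Re (x j)))"
proof -
  have xe: "x = (\<lambda>j. of_real (Re (x j)))" using assms by (auto simp: of_real_Re)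
  show ?thesis by (subst xe) (simp add: signless_lap_apply_def)
qed

lemma charac:
  fixes E :: "'a::finite set set"
  assumes k3: "k \<ge> 3" and ko: "odd k" and unif: "\<forall>e\<in>E. card e = k"
  shows "min_can_H0 k E = {x. \<exists>i\<in>singletons E. x = dl i 1 \<or> x = dl i (-1)}"
proof (intro set_eqI iffI)
  fix x assume "x \<in> min_can_H0 k E"
  then have H: "is_H_eigvec k E 0 x" and can: "canonical x" and mi: "minimal_zero_eigvec k E x"
    by (auto simp: min_can_H0_def)
  have re: "\<forall>i. x i \<in> \<real>" and ev: "is_eigvec k E 0 x" using H by (auto simp: is_H_eigvec_def)
  obtain j0 where j0: "x j0 \<noteq> 0" using ev by (auto simp: is_eigvec_def)
  have "\<forall>i. real (hdeg E i) * Re (x i) ^ (k-1) + (\<Sum>e\<in>edges_at E i. \<Prod>j\<in>e-{i}. Re (x j)) = 0"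
  proof
    fix i
    have "signless_lap_apply k E x i = 0" using ev k3 by (simp add: is_eigvec_def)
    then show "real (hdeg E i) * Re (x i) ^ (k-1) + (\<Sum>e\<in>edges_at E i. \<Prod>j\<in>e-{i}. Re (x j)) = 0"
      using real_eq[OF re, of k E i] by (metis of_real_eq_0_iff)
  qed
  moreover have "Re (x j0) \<noteq> 0" using j0 re by (metis complex_eq_iff zero_complex.simps Reals_cases Im_complex_of_real)
  ultimately obtain i where hi: "hdeg E i = 0" and ri: "Re (x i) \<noteq> 0" using key[OF k3 ko unif, where r="\<lambda>j. Re (x j)"] by blast
  have xi: "x i \<noteq> 0" using ri by auto
  have de: "is_eigvec k E 0 (dl i 1)" using delta_eig[OF k3 unif hi] by simp
  have vs: "vsupp (dl i 1) = {i}" by (auto simp: vsupp_def dl_def)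
  have "{i} \<subseteq> vsupp x" using xi by (simp add: vsupp_def)
  then have "vsupp x = {i}" using mi de vs unfolding minimal_zero_eigvec_def by blast
  then have x0: "\<And>j. j \<noteq> i \<Longrightarrow> x j = 0" by (auto simp: vsupp_def)
  have le: "\<forall>j. cmod (x j) \<le> cmod (x i)" using x0 by (metis norm_ge_zero norm_zero order_refl)
  have "Max (range (\<lambda>j. cmod (x j))) = cmod (x i)"
    by (rule Max_eqI) (use le in auto)
  then have c1: "cmod (x i) = 1" using can by (simp add: canonical_def)
  obtain t where t: "x i = of_real t" using re by (metis Reals_cases)
  then have "\<bar>t\<bar> = 1" using c1 by simp
  then have "x i = 1 \<or> x i = -1" using t by (auto simp: abs_if split: if_splits)
  then have "x = dl i 1 \<or> x = dl i (-1)" using x0 by (auto simp: dl_def)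
  then show "x \<in> {x. \<exists>i\<in>singletons E. x = dl i 1 \<or> x = dl i (-1)}" using hi by (auto simp: singletons_def)
next
  fix x assume "x \<in> {x. \<exists>i\<in>singletons E. x = dl i 1 \<or> x = dl i (-1)}"
  then obtain i c where hi: "hdeg E i = 0" and xc: "x = dl i c" and c: "c = 1 \<or> c = -1"
    by (auto simp: singletons_def)
  have cnz: "c \<noteq> 0" using c by auto
  have ev: "is_eigvec k E 0 x" using delta_eig[OF k3 unif hi cnz] xc by simp
  have "\<forall>j. x j \<in> \<real>" using c xc by (auto simp: dl_def)
  then have H: "is_H_eigvec k E 0 x" using ev by (simp add: is_H_eigvec_def)
  have "Max (range (\<lambda>j. cmod (x j))) = 1"
    by (rule Max_eqI) (use c xc in \<open>auto simp: dl_def\<close>)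
  then have can: "canonical x" by (simp add: canonical_def)
  have vs: "vsupp x = {i}" using xc cnz by (auto simp: vsupp_def dl_def)
  have "\<not> (\<exists>y. is_eigvec k E 0 y \<and> vsupp y \<subset> vsupp x)"
  proof
    assume "\<exists>y. is_eigvec k E 0 y \<and> vsupp y \<subset> vsupp x"
    then obtain y where y: "is_eigvec k E 0 y" "vsupp y \<subset> {i}" using vs by auto
    then have "vsupp y = {}" by auto
    then have "y = (\<lambda>_. 0)" by (auto simp: vsupp_def)
    then show False using y by (simp add: is_eigvec_def)
  qed
  then show "x \<in> min_can_H0 k E" using H can ev by (simp add: min_can_H0_def minimal_zero_eigvec_def)
qed

theorem corollary5p1:
  fixes k :: nat and E :: "'a::finite set set"
  assumes "k \<ge> 3" and "odd k" and "uniform_hypergraph k E"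
  shows "finite ((\<lambda>x. {x, - x}) ` min_can_H0 k E)
         \<and> card ((\<lambda>x. {x, - x}) ` min_can_H0 k E) = card (singletons E)"
proof -
  have unif: "\<forall>e\<in>E. card e = k" using assms(3) by (simp add: uniform_hypergraph_def)
  have neg: "- dl i c = dl i (-c)" for i c by (auto simp: dl_def)
  have img: "(\<lambda>x. {x, - x}) ` min_can_H0 k E = (\<lambda>i. {dl i 1, dl i (-1)}) ` singletons E"
    unfolding charac[OF assms(1,2) unif] by (auto simp: neg insert_commute image_iff)
  have inj: "inj_on (\<lambda>i. {dl i 1, dl i (-1)}) (singletons E)"
  proof (rule inj_onI)
    fix i j assume "{dl i 1, dl i (-1)} = {dl j 1, dl j (-1)}"
    then have "dl i 1 = dl j 1 \<or> dl i 1 = dl j (-1)" by (metis insertCI insertE singletonD)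
    then have "dl i 1 i = dl j 1 i \<or> dl i 1 i = dl j (-1) i" by auto
    then show "i = j" by (auto simp: dl_def split: if_splits)
  qed
  show ?thesis unfolding img using card_image[OF inj] by simp
qed
end
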